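(* Let $M:[0,\infty)\to\mathbb{R}$ be continuous and satisfy condition (M3) for some $\gamma>0$ (see context), and let $T\ge 0$. Define functions on $[T,\infty)$ by $q_1(t):=M(t)$, $Q_k(t):=-\int_t^\infty q_k(s)\,ds$ for $k\ge1$, and $q_k(t):=\sum_{j=1}^{k-1}Q_j(t)Q_{k-j}(t)$ for $k\ge 2$, and set $\phi(t):=-\int_t^\infty Q_2(s)\,ds$. Then $Q_2(t)\le 0$ for $t\ge T$, and for every integer $k\ge 2$ and every $t\ge T$, $$|Q_k(t)|\le 4^{k-1}\big(-Q_2(t)\big)\,\phi(t)^{\frac{k-2}{2}}.$$
   Context: Condition (M3) (with $\gamma>0$): $\big|\int_t^\infty M(s)\,ds\big|\lesssim(1+t)^{-\gamma}$, $\int_t^\infty\big(\int_s^\infty M(\sigma)\,d\sigma\big)^2ds\lesssim(1+t)^{-\gamma}$ for $t\ge 0$, and $\int_0^\infty\int_t^\infty\big(\int_s^\infty M(\sigma)\,d\sigma\big)^2\,ds\,dt<\infty$; here $f\lesssim g$ means $f\le Cg$ with $C$ independent of $t$. *)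

theory Defs
  imports "HOL-Analysis.Analysis"
begin

text \<open>Tail integral \<open>\<integral>_t^\<infinity> f\<close>, as a Henstock--Kurzweil integral over \<open>{t..}\<close>
  (on an unbounded interval this is the improper integral \<open>lim_{b\<rightarrow>\<infinity>} \<integral>_t^b f\<close>).\<close>
definition tailint :: "(real \<Rightarrow> real) \<Rightarrow> real \<Rightarrow> real" where
  "tailint f t = integral {t..} f"

text \<open>Condition (M3) with exponent \<open>\<gamma>\<close>; the existence of the improper integrals
  occurring in it is part of the condition.\<close>
definition M3 :: "(real \<Rightarrow> real) \<Rightarrow> real \<Rightarrow> bool" where
  "M3 M \<gamma> \<longleftrightarrow>
     (\<forall>t\<ge>0. M integrable_on {t..}) \<and>
     (\<forall>t\<ge>0. (\<lambda>s. (tailint M s)\<^sup>2) integrable_on {t..}) \<and>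
     (\<lambda>t. tailint (\<lambda>s. (tailint M s)\<^sup>2) t) integrable_on {0..} \<and>
     (\<exists>C. \<forall>t\<ge>0. \<bar>tailint M t\<bar> \<le> C * (1 + t) powr (- \<gamma>)) \<and>
     (\<exists>C. \<forall>t\<ge>0. tailint (\<lambda>s. (tailint M s)\<^sup>2) t \<le> C * (1 + t) powr (- \<gamma>))"

function Qk :: "(real \<Rightarrow> real) \<Rightarrow> nat \<Rightarrow> real \<Rightarrow> real" where
  "Qk M 0 t = 0"
| "Qk M (Suc 0) t = - tailint M t"
| "Qk M (Suc (Suc n)) t =
     - tailint (\<lambda>s. \<Sum>j=1..Suc n. Qk M j s * Qk M (Suc (Suc n) - j) s) t"
  by pat_completeness auto
termination
  by (relation "Wellfounded.measure (\<lambda>(M, k, t). k)") auto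

definition qk :: "(real \<Rightarrow> real) \<Rightarrow> nat \<Rightarrow> real \<Rightarrow> real" where
  "qk M k t = (if k = 1 then M t else (\<Sum>j=1..k-1. Qk M j t * Qk M (k - j) t))"

definition phi :: "(real \<Rightarrow> real) \<Rightarrow> real \<Rightarrow> real" where
  "phi M t = - tailint (Qk M 2) t"

lemma Qk_qk: "Qk M k t = - tailint (qk M k) t" if "k \<ge> 1"
proof (cases k)
  case (Suc n)
  then show ?thesis
  proof (cases n)
    case 0 with Suc show ?thesis by (simp add: qk_def[abs_def])
  next
    case (Suc m)
    with \<open>k = Suc n\<close> show ?thesis unfolding qk_def[abs_def] by simp
  qed
qed (use that in simp)

end

theory Submission
  imports Defs
begin

lemma integrable_tail_subset:
  fixes f :: "real \<Rightarrow> real"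
  assumes "f integrable_on {a..}" "\<And>x. x \<ge> a \<Longrightarrow> f x \<ge> 0" "a \<le> b"
  shows "f integrable_on {b..}"
proof -
  have "f absolutely_integrable_on {a..}"
    using assms by (intro nonnegative_absolutely_integrable_1) auto
  then have "f absolutely_integrable_on {b..}"
    by (rule set_integrable_subset) (use assms in auto)
  then show ?thesis using absolutely_integrable_on_def by blast
qed

lemma tail_split:
  fixes f :: "real \<Rightarrow> real"
  assumes "continuous_on {0..} f" "\<And>x. x \<ge> 0 \<Longrightarrow> f integrable_on {x..}" "x \<ge> 0"
  shows "tailint f x = integral {0..} f - integral {0..x} f"
proof -
  have i1: "(f has_integral integral {0..x} f) {0..x}"
    using assms by (intro integrable_integral integrable_continuous_interval continuous_on_subset[OF assms(1)]) auto
  have i2: "(f has_integral integral {x..} f) {x..}"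
    using assms by (intro integrable_integral) auto
  have "(f has_integral (integral {0..x} f + integral {x..} f)) ({0..x} \<union> {x..})"
    by (rule has_integral_Un[OF i1 i2]) (auto intro: negligible_subset[of "{x}"])
  moreover have "{0..x} \<union> {x..} = {0::real..}" using assms(3) by auto
  ultimately have "integral {0..} f = integral {0..x} f + integral {x..} f"
    by (simp add: integral_unique)
  then show ?thesis unfolding tailint_def by simp
qed

lemma tail_deriv:
  fixes f :: "real \<Rightarrow> real"
  assumes "continuous_on {0..} f" "\<And>x. x \<ge> 0 \<Longrightarrow> f integrable_on {x..}" "0 \<le> a" "y \<in> {a..b}"
  shows "(tailint f has_real_derivative - f y) (at y within {a..b})"
proof -
  have "((\<lambda>u. integral {0..u} f) has_vector_derivative f y) (at y within {0..b})"
    using assms by (intro integral_has_vector_derivative continuous_on_subset[OF assms(1)]) auto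
  then have "((\<lambda>u. integral {0..u} f) has_vector_derivative f y) (at y within {a..b})"
    by (rule has_vector_derivative_within_subset) (use assms in auto)
  then have D: "((\<lambda>u. integral {0..u} f) has_real_derivative f y) (at y within {a..b})"
    by (simp add: has_real_derivative_iff_has_vector_derivative)
  have "((\<lambda>u. integral {0..} f - integral {0..u} f) has_real_derivative - f y) (at y within {a..b})"
    using DERIV_diff[OF DERIV_const D] by simp
  then show ?thesis
    by (rule has_field_derivative_transform_within[where d=1]) (use assms tail_split in auto)
qed

lemma tail_cont:
  fixes f :: "real \<Rightarrow> real"
  assumes "continuous_on {0..} f" "\<And>x. x \<ge> 0 \<Longrightarrow> f integrable_on {x..}"
  shows "continuous_on {0..} (tailint f)"
  unfolding continuous_on_eq_continuous_within
proof
  fix x :: real assume x: "x \<in> {0..}"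
  have "continuous (at x within {0..x+1}) (tailint f)"
    using tail_deriv[OF assms, of 0 x "x+1"] x by (auto intro: DERIV_continuous)
  moreover have "at x within {0..} = at x within {0..x+1}"
    by (rule at_within_nhd[where S="{..<x+1}"]) auto
  ultimately show "continuous (at x within {0..}) (tailint f)"
    by (simp add: continuous_within)
qed

lemma tail_limit_le:
  fixes f :: "real \<Rightarrow> real"
  assumes f: "f integrable_on {t..}" and nn: "\<And>x. x \<ge> t \<Longrightarrow> f x \<ge> 0"
    and le: "\<And>b. b \<ge> t \<Longrightarrow> integral {t..b} f \<le> C"
  shows "integral {t..} f \<le> C"
proof -
  define F where "F = (\<lambda>k::nat. \<lambda>x. if x \<in> {t..t + real k} then f x else 0)"
  have "(\<lambda>k. integral {t..} (F k)) \<longlonglongrightarrow> integral {t..} f"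
  proof (rule dominated_convergence(2)[where h=f])
    fix k
    have "{t..t + real k} \<inter> {t..} = {t..t+real k}" by auto
    moreover have "f integrable_on {t..t + real k}"
      by (rule integrable_on_subinterval[OF f]) auto
    ultimately show "F k integrable_on {t..}"
      unfolding F_def integrable_restrict_Int by simp
  next
    fix k x assume "x \<in> {t::real..}"
    then show "norm (F k x) \<le> f x" using nn by (auto simp: F_def)
  next
    fix x :: real assume x: "x \<in> {t..}"
    obtain N :: nat where N: "x - t \<le> real N" using real_arch_simple by blast
    have "eventually (\<lambda>k. F k x = f x) sequentially"
      unfolding eventually_sequentially
      by (rule exI[of _ N]) (use N x in \<open>auto simp: F_def\<close>)
    then show "(\<lambda>k. F k x) \<longlonglongrightarrow> f x"
      by (rule tendsto_eventually)
  qed (use f in auto)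
  moreover have "integral {t..} (F k) \<le> C" for k
  proof -
    have "{t..t + real k} \<inter> {t..} = {t..t+real k}" by auto
    then have "integral {t..} (F k) = integral {t..t+real k} f"
      unfolding F_def integral_restrict_Int by simp
    then show ?thesis using le[of "t + real k"] by simp
  qed
  ultimately show ?thesis by (meson LIMSEQ_le_const2)
qed

lemma meas_int:
  fixes h H :: "real \<Rightarrow> real"
  assumes "continuous_on {0..} h" "0 \<le> t" "H integrable_on {t..}"
    "\<And>x. x \<ge> t \<Longrightarrow> \<bar>h x\<bar> \<le> H x"
  shows "h integrable_on {t..}"
proof (rule measurable_bounded_by_integrable_imp_integrable_real)
  show "h \<in> borel_measurable (lebesgue_on {t..})"
    by (rule continuous_imp_measurable_on_sets_lebesgue)
       (use assms in \<open>auto intro: continuous_on_subset\<close>)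
qed (use assms in auto)

lemma tail_nonneg:
  fixes g :: "real \<Rightarrow> real"
  assumes "\<And>x. x \<ge> 0 \<Longrightarrow> g x \<ge> 0" "\<And>x. x \<ge> 0 \<Longrightarrow> g integrable_on {x..}" "0 \<le> t"
  shows "tailint g t \<ge> 0"
  unfolding tailint_def using assms by (intro integral_nonneg) auto

lemma tail_mono:
  fixes g :: "real \<Rightarrow> real"
  assumes "\<And>x. x \<ge> 0 \<Longrightarrow> g x \<ge> 0" "\<And>x. x \<ge> 0 \<Longrightarrow> g integrable_on {x..}" "0 \<le> t" "t \<le> s"
  shows "tailint g s \<le> tailint g t"
  unfolding tailint_def using assms by (intro integral_subset_le) auto

lemma pow_int:
  fixes g :: "real \<Rightarrow> real"
  assumes gc: "continuous_on {0..} g" and gnn: "\<And>x. x \<ge> 0 \<Longrightarrow> g x \<ge> 0"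
    and gi: "\<And>x. x \<ge> 0 \<Longrightarrow> g integrable_on {x..}" and t: "0 \<le> t"
  shows "(\<lambda>s. g s * tailint g s ^ n) integrable_on {t..}"
    "integral {t..} (\<lambda>s. g s * tailint g s ^ n) \<le> tailint g t ^ Suc n / Suc n"
proof -
  let ?phi = "tailint g"
  have pc: "continuous_on {0..} ?phi" by (rule tail_cont[OF gc gi])
  show I: "(\<lambda>s. g s * ?phi s ^ n) integrable_on {t..}"
  proof (rule meas_int[OF _ t])
    show "continuous_on {0..} (\<lambda>s. g s * ?phi s ^ n)"
      by (intro continuous_intros gc pc)
    show "(\<lambda>s. g s * ?phi t ^ n) integrable_on {t..}"
      by (rule integrable_on_mult_left) (use gi t in auto)
    fix x assume x: "t \<le> x"
    have "\<bar>g x * ?phi x ^ n\<bar> = g x * ?phi x ^ n"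
      using gnn tail_nonneg[OF gnn gi] x t by simp
    also have "\<dots> \<le> g x * ?phi t ^ n"
      by (intro mult_left_mono power_mono tail_mono[OF gnn gi] tail_nonneg[OF gnn gi])
         (use x t gnn in auto)
    finally show "\<bar>g x * ?phi x ^ n\<bar> \<le> g x * ?phi t ^ n" .
  qed
  show "integral {t..} (\<lambda>s. g s * ?phi s ^ n) \<le> ?phi t ^ Suc n / Suc n"
  proof (rule tail_limit_le[OF I])
    fix x assume "t \<le> x" then show "0 \<le> g x * ?phi x ^ n"
      using gnn tail_nonneg[OF gnn gi] t by simp
  next
    fix b assume b: "t \<le> b"
    define H where "H = (\<lambda>x. - (?phi x ^ Suc n / Suc n))"
    have "((\<lambda>s. g s * ?phi s ^ n) has_integral (H b - H t)) {t..b}"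
    proof (rule fundamental_theorem_of_calculus[OF b])
      fix x assume x: "x \<in> {t..b}"
      have "(?phi has_real_derivative - g x) (at x within {t..b})"
        by (rule tail_deriv[OF gc gi t x])
      then have "((\<lambda>x. ?phi x ^ Suc n) has_real_derivative of_nat (Suc n) * (- g x * ?phi x ^ n)) (at x within {t..b})"
        using DERIV_power[of ?phi "- g x" x "{t..b}" "Suc n"] by simp
      then have "(H has_real_derivative - (of_nat (Suc n) * (- g x * ?phi x ^ n) / Suc n)) (at x within {t..b})"
        unfolding H_def by (intro DERIV_minus DERIV_cdivide) 
      then show "(H has_vector_derivative g x * ?phi x ^ n) (at x within {t..b})"
        by (simp add: has_real_derivative_iff_has_vector_derivative[symmetric] del: of_nat_Suc)
    qed
    then have "integral {t..b} (\<lambda>s. g s * ?phi s ^ n) = H b - H t"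
      by (rule integral_unique)
    also have "\<dots> \<le> ?phi t ^ Suc n / Suc n"
      unfolding H_def using tail_nonneg[OF gnn gi, of b] t b by simp
    finally show "integral {t..b} (\<lambda>s. g s * ?phi s ^ n) \<le> ?phi t ^ Suc n / Suc n" .
  qed
qed

lemma sqrt_pow_even: "(x::real) \<ge> 0 \<Longrightarrow> sqrt x ^ (2 * n) = x ^ n"
  by (simp add: power_mult)

lemma sqrt_pow_int:
  fixes g :: "real \<Rightarrow> real"
  assumes gc: "continuous_on {0..} g" and gnn: "\<And>x. x \<ge> 0 \<Longrightarrow> g x \<ge> 0"
    and gi: "\<And>x. x \<ge> 0 \<Longrightarrow> g integrable_on {x..}" and t: "0 \<le> t"
  shows "(\<lambda>s. g s * sqrt (tailint g s) ^ m) integrable_on {t..} \<and>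
    integral {t..} (\<lambda>s. g s * sqrt (tailint g s) ^ m) \<le> 2 * sqrt (tailint g t) ^ (m + 2) / (m + 1)"
proof -
  let ?phi = "tailint g"
  have pnn: "\<And>x. x \<ge> 0 \<Longrightarrow> ?phi x \<ge> 0" using tail_nonneg[OF gnn gi] .
  have pc: "continuous_on {0..} ?phi" by (rule tail_cont[OF gc gi])
  have "\<exists>n. m = 2 * n \<or> m = 2 * n + 1" by presburger
  then obtain n where "m = 2 * n \<or> m = 2 * n + 1" by blast
  then show ?thesis
  proof
    assume m: "m = 2 * n"
    have eq: "(\<lambda>s. g s * sqrt (?phi s) ^ m) x = (\<lambda>s. g s * ?phi s ^ n) x" if "x \<in> {t..}" for x
      using pnn[of x] that t m by (simp add: power_mult)
    have I: "(\<lambda>s. g s * ?phi s ^ n) integrable_on {t..}" by (rule pow_int[OF gc gnn gi t])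
    have I0: "(\<lambda>s. g s * sqrt (?phi s) ^ m) integrable_on {t..}"
      using integrable_cong[of "{t..}" "\<lambda>s. g s * sqrt (?phi s) ^ m" "\<lambda>s. g s * ?phi s ^ n"] eq I by simp
    have "integral {t..} (\<lambda>s. g s * sqrt (?phi s) ^ m) = integral {t..} (\<lambda>s. g s * ?phi s ^ n)"
      by (rule integral_cong) (use eq in simp)
    also have "\<dots> \<le> ?phi t ^ Suc n / Suc n" by (rule pow_int[OF gc gnn gi t])
    also have "\<dots> = sqrt (?phi t) ^ (m + 2) / Suc n"
    proof -
      have "m + 2 = 2 * Suc n" using m by simp
      then show ?thesis using sqrt_pow_even[OF pnn[OF t], of "Suc n"] by simp
    qed
    also have "\<dots> \<le> 2 * sqrt (?phi t) ^ (m + 2) / (m + 1)"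
    proof -
      have "0 \<le> sqrt (?phi t) ^ (m + 2)" using pnn[OF t] by simp
      then show ?thesis using m by (simp add: field_simps)
    qed
    finally show ?thesis using I0 by simp
  next
    assume m: "m = 2 * n + 1"
    let ?P = "sqrt (?phi t)"
    have I: "(\<lambda>s. g s * ?phi s ^ n) integrable_on {t..}" by (rule pow_int[OF gc gnn gi t])
    have I2: "(\<lambda>s. ?P * (g s * ?phi s ^ n)) integrable_on {t..}" by (rule integrable_on_mult_right[OF I])
    have le: "g x * sqrt (?phi x) ^ m \<le> ?P * (g x * ?phi x ^ n)" if "x \<ge> t" for x
    proof -
      have "sqrt (?phi x) ^ m = sqrt (?phi x) * ?phi x ^ n"
        using pnn[of x] that t m by (simp add: power_mult)
      moreover have "sqrt (?phi x) \<le> ?P"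
        using tail_mono[OF gnn gi t that] by simp
      ultimately show ?thesis
        using gnn[of x] pnn[of x] that t
        by (simp add: mult_right_mono mult_left_mono mult.left_commute)
    qed
    have I3: "(\<lambda>s. g s * sqrt (?phi s) ^ m) integrable_on {t..}"
    proof (rule meas_int[OF _ t I2])
      show "continuous_on {0..} (\<lambda>s. g s * sqrt (?phi s) ^ m)"
        by (intro continuous_intros gc pc)
      fix x assume x: "t \<le> x"
      then show "\<bar>g x * sqrt (?phi x) ^ m\<bar> \<le> ?P * (g x * ?phi x ^ n)"
        using le[OF x] gnn[of x] pnn[of x] t by simp
    qed
    have "integral {t..} (\<lambda>s. g s * sqrt (?phi s) ^ m) \<le> integral {t..} (\<lambda>s. ?P * (g s * ?phi s ^ n))"
      by (rule integral_le[OF I3 I2]) (use le in auto)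
    also have "\<dots> = ?P * integral {t..} (\<lambda>s. g s * ?phi s ^ n)" by simp
    also have "\<dots> \<le> ?P * (?phi t ^ Suc n / Suc n)"
      by (intro mult_left_mono pow_int(2)[OF gc gnn gi t] real_sqrt_ge_zero pnn[OF t])
    also have "\<dots> = 2 * sqrt (?phi t) ^ (m + 2) / (m + 1)"
    proof -
      have mm: "m + 2 = Suc (2 * Suc n)" using m by simp
      have E: "sqrt (?phi t) ^ (m + 2) = ?P * ?phi t ^ Suc n"
        unfolding mm power_Suc using sqrt_pow_even[OF pnn[OF t], of "Suc n"] by simp
      have R: "real (m + 1) = 2 * real (Suc n)" using m by simp
      have "2 * sqrt (?phi t) ^ (m + 2) / real (m + 1) = 2 * (?P * ?phi t ^ Suc n) / (2 * real (Suc n))"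
        by (simp only: E R)
      also have "\<dots> = ?P * (?phi t ^ Suc n / Suc n)"
        by (simp add: field_simps)
      finally show ?thesis by simp
    qed
    finally show ?thesis using I3 by simp
  qed
qed

lemma inf_bound:
  fixes X c \<phi> :: real
  assumes "c \<ge> 0" "\<phi> \<ge> 0" "\<And>l. l > 0 \<Longrightarrow> X \<le> (l * c + c * \<phi> / l) / 2"
  shows "X \<le> c * sqrt \<phi>"
proof (cases "\<phi> > 0")
  case True
  have "X \<le> (sqrt \<phi> * c + c * \<phi> / sqrt \<phi>) / 2" using assms(3)[of "sqrt \<phi>"] True by simp
  also have "c * \<phi> / sqrt \<phi> = c * sqrt \<phi>" using True
    by (metis less_eq_real_def real_div_sqrt times_divide_eq_right)
  finally show ?thesis by simp
next
  case False
  then have p: "\<phi> = 0" using assms by simp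
  show ?thesis
  proof (rule ccontr)
    assume "\<not> ?thesis"
    then have X: "X > 0" using p by simp
    show False
    proof (cases "c = 0")
      case True then show False using assms(3)[of 1] X by simp
    next
      case False
      then have "c > 0" using assms by simp
      then have "X \<le> (X / c * c) / 2" using assms(3)[of "X / c"] X p by simp
      then show False using X \<open>c > 0\<close> by simp
    qed
  qed
qed

lemma FG_int:
  fixes F g :: "real \<Rightarrow> real"
  assumes Fc: "continuous_on {0..} F"
    and Ai: "\<And>x. x \<ge> 0 \<Longrightarrow> (\<lambda>s. F s ^ 2) integrable_on {x..}"
    and g_def: "g = tailint (\<lambda>s. F s ^ 2)"
    and gi: "\<And>x. x \<ge> 0 \<Longrightarrow> g integrable_on {x..}"
    and t: "0 \<le> t"
  shows "(\<lambda>s. \<bar>F s\<bar> * g s) integrable_on {t..} \<and>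
    integral {t..} (\<lambda>s. \<bar>F s\<bar> * g s) \<le> g t * sqrt (tailint g t)"
proof -
  have Ac: "continuous_on {0..} (\<lambda>s. F s ^ 2)" by (intro continuous_intros Fc)
  have gc: "continuous_on {0..} g" unfolding g_def by (rule tail_cont[OF Ac Ai])
  have gnn: "\<And>x. x \<ge> 0 \<Longrightarrow> g x \<ge> 0" unfolding g_def
    by (rule tail_nonneg) (use Ai in auto)
  have gmono: "\<And>s. s \<ge> t \<Longrightarrow> g s \<le> g t" unfolding g_def
    by (rule tail_mono) (use Ai t in auto)
  have pnn: "tailint g t \<ge> 0" by (rule tail_nonneg[OF gnn gi t])
  have hA: "((\<lambda>s. F s ^ 2) has_integral g t) {t..}"
    unfolding g_def tailint_def using Ai[OF t] by (rule integrable_integral)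
  have hg: "(g has_integral tailint g t) {t..}"
    unfolding tailint_def using gi[OF t] by (rule integrable_integral)
  define H where "H = (\<lambda>l s. (l / 2) * F s ^ 2 + (g t / (2 * l)) * g s)"
  have hH: "(H l has_integral ((l / 2) * g t + (g t / (2 * l)) * tailint g t)) {t..}" for l
    unfolding H_def by (intro has_integral_add has_integral_mult_right hA hg)
  have pw: "\<bar>F s\<bar> * g s \<le> H l s" if "l > 0" "s \<ge> t" for l s
  proof -
    have "0 \<le> (l * \<bar>F s\<bar> - g s) ^ 2" by simp
    then have "2 * l * (\<bar>F s\<bar> * g s) \<le> l ^ 2 * F s ^ 2 + g s * g s"
      by (simp add: power2_eq_square algebra_simps)
    also have "\<dots> \<le> l ^ 2 * F s ^ 2 + g t * g s"
      using gmono[OF that(2)] gnn[of s] that t by (intro add_left_mono mult_right_mono) auto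
    finally have "2 * l * (\<bar>F s\<bar> * g s) \<le> l ^ 2 * F s ^ 2 + g t * g s" .
    then show ?thesis using that(1) unfolding H_def
      by (simp add: field_simps power2_eq_square)
  qed
  have I: "(\<lambda>s. \<bar>F s\<bar> * g s) integrable_on {t..}"
  proof (rule meas_int[OF _ t])
    show "continuous_on {0..} (\<lambda>s. \<bar>F s\<bar> * g s)" by (intro continuous_intros Fc gc)
    show "H 1 integrable_on {t..}" using hH by blast
    fix x assume "t \<le> x"
    then show "\<bar>\<bar>F x\<bar> * g x\<bar> \<le> H 1 x" using pw[of 1 x] gnn[of x] t by simp
  qed
  have "integral {t..} (\<lambda>s. \<bar>F s\<bar> * g s) \<le> g t * sqrt (tailint g t)"
  proof (rule inf_bound[OF gnn[OF t] pnn])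
    fix l :: real assume l: "l > 0"
    have "integral {t..} (\<lambda>s. \<bar>F s\<bar> * g s) \<le> integral {t..} (H l)"
      by (rule integral_le[OF I]) (use hH pw l in auto)
    also have "\<dots> = (l / 2) * g t + (g t / (2 * l)) * tailint g t"
      using hH by (rule integral_unique)
    also have "\<dots> = (l * g t + g t * tailint g t / l) / 2" by (simp add: field_simps)
    finally show "integral {t..} (\<lambda>s. \<bar>F s\<bar> * g s) \<le> (l * g t + g t * tailint g t / l) / 2" .
  qed
  with I show ?thesis by simp
qed



lemma sum_split3: "sum (a::nat \<Rightarrow> real) {1..Suc (Suc r)} = a 1 + sum a {2..Suc r} + a (Suc (Suc r))"
proof -
  have "sum a {1..Suc (Suc r)} = a 1 + sum a {Suc 1..Suc (Suc r)}"
    by (rule sum.atLeast_Suc_atMost) simp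
  also have "Suc 1 = 2" by simp
  also have "sum a {2..Suc (Suc r)} = sum a {2..Suc r} + a (Suc (Suc r))"
    by simp
  finally show ?thesis by simp
qed

declare Qk.simps(3)[simp del]

lemma main_ind:
  fixes M :: "real \<Rightarrow> real"
  assumes Mc: "continuous_on {0..} M"
    and Mi: "\<And>x. x \<ge> 0 \<Longrightarrow> M integrable_on {x..}"
    and Ai: "\<And>x. x \<ge> 0 \<Longrightarrow> (\<lambda>s. (tailint M s)\<^sup>2) integrable_on {x..}"
    and gi0: "(\<lambda>t. tailint (\<lambda>s. (tailint M s)\<^sup>2) t) integrable_on {0..}"
    and g_def: "g = tailint (\<lambda>s. (tailint M s)\<^sup>2)"
  shows "1 \<le> k \<Longrightarrow> continuous_on {0..} (Qk M k) \<and> (\<forall>t\<ge>0. qk M k integrable_on {t..}) \<and>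
    (2 \<le> k \<longrightarrow> (\<forall>s\<ge>0. \<bar>Qk M k s\<bar> \<le> 4 ^ (k - 1) * g s * sqrt (tailint g s) ^ (k - 2)))"
proof (induction k rule: less_induct)
  case (less k)
  define F where "F = tailint M"
  have Fc: "continuous_on {0..} F" unfolding F_def by (rule tail_cont[OF Mc Mi])
  have Ai': "\<And>x. x \<ge> 0 \<Longrightarrow> (\<lambda>s. F s ^ 2) integrable_on {x..}" using Ai unfolding F_def .
  have g_def': "g = tailint (\<lambda>s. F s ^ 2)" using g_def unfolding F_def .
  have Ac: "continuous_on {0..} (\<lambda>s. F s ^ 2)" by (intro continuous_intros Fc)
  have gc: "continuous_on {0..} g" unfolding g_def' by (rule tail_cont[OF Ac Ai'])
  have gnn: "\<And>x. x \<ge> 0 \<Longrightarrow> g x \<ge> 0" unfolding g_def'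
    by (rule tail_nonneg) (use Ai' in auto)
  have gi: "\<And>x. x \<ge> 0 \<Longrightarrow> g integrable_on {x..}"
    by (rule integrable_tail_subset[of g 0]) (use gi0 g_def gnn in auto)
  have pnn: "\<And>x. x \<ge> 0 \<Longrightarrow> tailint g x \<ge> 0" by (rule tail_nonneg[OF gnn gi])
  have Q1: "\<And>s. Qk M 1 s = - F s" unfolding F_def by simp
  have q2: "qk M 2 = (\<lambda>s. F s ^ 2)"
    by (rule ext) (simp add: qk_def Q1 power2_eq_square F_def)
  have Q2: "\<And>s. Qk M 2 s = - g s"
    using Qk_qk[of 2 M] unfolding q2 g_def' by simp
  show ?case
  proof -
    consider "k = 1" | "k = 2" | "k \<ge> 3"
      using less.prems by linarith
    then show ?thesis
    proof cases
      case 1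
      have "Qk M k = (\<lambda>s. - F s)" using 1 Q1 by auto
      moreover have "qk M k = M" using 1 by (auto simp: qk_def)
      ultimately show ?thesis using 1 Fc Mi by (auto intro!: continuous_intros)
    next
      case 2
      have "Qk M k = (\<lambda>s. - g s)" using 2 Q2 by auto
      moreover have "\<bar>- g s\<bar> \<le> 4 * g s" if "s \<ge> 0" for s using gnn[OF that] by simp
      ultimately show ?thesis using 2 gc Ai' q2 by (auto intro!: continuous_intros)
    next
      case 3
      define r where "r = k - 3"
      have k: "k = Suc (Suc (Suc r))" using 3 unfolding r_def by simp
      have IHc: "\<And>j. 1 \<le> j \<Longrightarrow> j < k \<Longrightarrow> continuous_on {0..} (Qk M j)"
        using less.IH by blast
      have IHb: "\<And>j s. 2 \<le> j \<Longrightarrow> j < k \<Longrightarrow> 0 \<le> s \<Longrightarrow>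
          \<bar>Qk M j s\<bar> \<le> 4 ^ (j - 1) * g s * sqrt (tailint g s) ^ (j - 2)"
        using less.IH by auto
      have qeq: "qk M k = (\<lambda>s. \<Sum>j=1..Suc (Suc r). Qk M j s * Qk M (k - j) s)"
        using k by (auto simp: qk_def)
      have qc: "continuous_on {0..} (qk M k)" unfolding qeq
        by (intro continuous_on_sum continuous_on_mult IHc) (auto simp: k)
      have key: "qk M k integrable_on {t..} \<and>
          \<bar>Qk M k t\<bar> \<le> 4 ^ (k - 1) * g t * sqrt (tailint g t) ^ (k - 2)" if t: "t \<ge> 0" for t
      proof -
        define P where "P = sqrt (tailint g t)"
        have P0: "P \<ge> 0" unfolding P_def using pnn[OF t] by simp
        have gt0: "g t \<ge> 0" using gnn[OF t] .
        define c1 where "c1 = 2 * 4 ^ Suc r * P ^ r"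
        define c2 where "c2 = real r * 4 ^ Suc r * g t"
        have c10: "c1 \<ge> 0" unfolding c1_def using P0 by simp
        have c20: "c2 \<ge> 0" unfolding c2_def using gt0 by simp
        define D where "D = (\<lambda>s. c1 * (\<bar>F s\<bar> * g s) + c2 * (g s * sqrt (tailint g s) ^ (r - 1)))"
        have FG: "(\<lambda>s. \<bar>F s\<bar> * g s) integrable_on {t..}"
            "integral {t..} (\<lambda>s. \<bar>F s\<bar> * g s) \<le> g t * P"
          using FG_int[OF Fc Ai' g_def' gi t] unfolding P_def by auto
        have SP: "(\<lambda>s. g s * sqrt (tailint g s) ^ (r - 1)) integrable_on {t..}"
            "integral {t..} (\<lambda>s. g s * sqrt (tailint g s) ^ (r - 1)) \<le> 2 * P ^ (r - 1 + 2) / real (r - 1 + 1)"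
          using sqrt_pow_int[OF gc gnn gi t, of "r - 1"] unfolding P_def by auto
        have hD: "(D has_integral (c1 * integral {t..} (\<lambda>s. \<bar>F s\<bar> * g s) +
             c2 * integral {t..} (\<lambda>s. g s * sqrt (tailint g s) ^ (r - 1)))) {t..}"
          unfolding D_def by (intro has_integral_add has_integral_mult_right integrable_integral FG SP)
        have pw: "\<bar>qk M k s\<bar> \<le> D s" if s: "s \<ge> t" for s
        proof -
          have s0: "s \<ge> 0" using s t by simp
          have gs0: "g s \<ge> 0" using gnn[OF s0] .
          have ps: "sqrt (tailint g s) \<le> P" unfolding P_def using tail_mono[OF gnn gi t s] by simp
          have ps0: "sqrt (tailint g s) \<ge> 0" using pnn[OF s0] by simp
          define a where "a = (\<lambda>j. \<bar>Qk M j s * Qk M (k - j) s\<bar>)"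
          have X: "\<bar>F s\<bar> * \<bar>Qk M (Suc (Suc r)) s\<bar> \<le> 4 ^ Suc r * P ^ r * (\<bar>F s\<bar> * g s)"
          proof -
            have "\<bar>Qk M (Suc (Suc r)) s\<bar> \<le> 4 ^ Suc r * g s * sqrt (tailint g s) ^ r"
              using IHb[of "Suc (Suc r)" s] s0 k by simp
            also have "\<dots> \<le> 4 ^ Suc r * g s * P ^ r"
              by (intro mult_left_mono power_mono ps ps0) (use gs0 in simp)
            finally show ?thesis
              by (rule mult_left_mono[THEN order_trans]) (simp_all add: algebra_simps)
          qed
          have a1: "a 1 \<le> 4 ^ Suc r * P ^ r * (\<bar>F s\<bar> * g s)"
            using X k unfolding a_def by (simp add: Q1 abs_mult F_def)
          have a2: "a (Suc (Suc r)) \<le> 4 ^ Suc r * P ^ r * (\<bar>F s\<bar> * g s)"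
          proof -
            have "k - Suc (Suc r) = 1" using k by simp
            then show ?thesis using X unfolding a_def by (simp add: Q1 abs_mult mult.commute F_def)
          qed
          have am: "a j \<le> 4 ^ Suc r * g t * (g s * sqrt (tailint g s) ^ (r - 1))"
            if j: "j \<in> {2..Suc r}" for j
          proof -
            let ?p = "sqrt (tailint g s)"
            have b1: "\<bar>Qk M j s\<bar> \<le> 4 ^ (j - 1) * g s * ?p ^ (j - 2)"
            proof -
              have "2 \<le> j" "j < k" using j k by auto
              then show ?thesis using IHb[of j s] s0 by simp
            qed
            have b2: "\<bar>Qk M (k - j) s\<bar> \<le> 4 ^ (k - j - 1) * g s * ?p ^ (k - j - 2)"
            proof -
              have "2 \<le> k - j" "k - j < k" using j k by auto
              then show ?thesis using IHb[of "k - j" s] s0 by simp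
            qed
            have "a j \<le> (4 ^ (j - 1) * g s * ?p ^ (j - 2)) * (4 ^ (k - j - 1) * g s * ?p ^ (k - j - 2))"
              unfolding a_def abs_mult by (intro mult_mono b1 b2) (use gs0 ps0 in simp_all)
            also have "\<dots> = (4 ^ (j - 1) * 4 ^ (k - j - 1)) * g s * (g s * (?p ^ (j - 2) * ?p ^ (k - j - 2)))"
              by (simp add: algebra_simps)
            also have "4 ^ (j - 1) * 4 ^ (k - j - 1) = (4::real) ^ Suc r"
            proof -
              have "j - 1 + (k - j - 1) = Suc r" using j k by auto
              then show ?thesis by (metis power_add)
            qed
            also have "?p ^ (j - 2) * ?p ^ (k - j - 2) = ?p ^ (r - 1)"
            proof -
              have "j - 2 + (k - j - 2) = r - 1" using j k by auto
              then show ?thesis by (metis power_add)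
            qed
            also have "4 ^ Suc r * g s * (g s * ?p ^ (r - 1)) \<le> 4 ^ Suc r * g t * (g s * ?p ^ (r - 1))"
              by (intro mult_right_mono mult_left_mono tail_mono) (use gs0 ps0 g_def' Ai' t s in \<open>auto intro: tail_mono\<close>)
            finally show ?thesis .
          qed
          have "\<bar>qk M k s\<bar> \<le> sum a {1..Suc (Suc r)}"
            unfolding qeq a_def by (rule sum_abs)
          also have "\<dots> = a 1 + sum a {2..Suc r} + a (Suc (Suc r))" by (rule sum_split3)
          also have "\<dots> \<le> 4 ^ Suc r * P ^ r * (\<bar>F s\<bar> * g s) +
              real r * (4 ^ Suc r * g t * (g s * sqrt (tailint g s) ^ (r - 1))) +
              4 ^ Suc r * P ^ r * (\<bar>F s\<bar> * g s)"
          proof -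
            have "sum a {2..Suc r} \<le> sum (\<lambda>j. 4 ^ Suc r * g t * (g s * sqrt (tailint g s) ^ (r - 1))) {2..Suc r}"
              by (rule sum_mono) (rule am)
            also have "\<dots> = real r * (4 ^ Suc r * g t * (g s * sqrt (tailint g s) ^ (r - 1)))" by simp
            finally show ?thesis using a1 a2 by linarith
          qed
          also have "\<dots> = D s" unfolding D_def c1_def c2_def by (simp add: algebra_simps)
          finally show ?thesis .
        qed
        have qi: "qk M k integrable_on {t..}"
          by (rule meas_int[OF qc t]) (use hD pw in auto)
        have "\<bar>Qk M k t\<bar> = \<bar>integral {t..} (qk M k)\<bar>"
          using Qk_qk[of k M t] k by (simp add: tailint_def)
        also have "\<dots> \<le> integral {t..} D"
        proof -
          have "norm (integral {t..} (qk M k)) \<le> integral {t..} D"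
            by (rule integral_norm_bound_integral[OF qi]) (use hD pw in auto)
          then show ?thesis by simp
        qed
        also have "\<dots> = c1 * integral {t..} (\<lambda>s. \<bar>F s\<bar> * g s) +
             c2 * integral {t..} (\<lambda>s. g s * sqrt (tailint g s) ^ (r - 1))"
          using hD by (rule integral_unique)
        also have "\<dots> \<le> 2 * 4 ^ Suc r * g t * P ^ Suc r + 2 * 4 ^ Suc r * g t * P ^ Suc r"
        proof (rule add_mono)
          have "c1 * integral {t..} (\<lambda>s. \<bar>F s\<bar> * g s) \<le> c1 * (g t * P)"
            by (rule mult_left_mono[OF FG(2) c10])
          then show "c1 * integral {t..} (\<lambda>s. \<bar>F s\<bar> * g s) \<le> 2 * 4 ^ Suc r * g t * P ^ Suc r"
            unfolding c1_def by (simp add: algebra_simps)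
        next
          show "c2 * integral {t..} (\<lambda>s. g s * sqrt (tailint g s) ^ (r - 1)) \<le> 2 * 4 ^ Suc r * g t * P ^ Suc r"
          proof (cases "r = 0")
            case True
            then show ?thesis unfolding c2_def using gt0 P0 by simp
          next
            case False
            have "c2 * integral {t..} (\<lambda>s. g s * sqrt (tailint g s) ^ (r - 1)) \<le>
                c2 * (2 * P ^ (r - 1 + 2) / real (r - 1 + 1))"
              by (rule mult_left_mono[OF SP(2) c20])
            also have "r - 1 + 2 = Suc r" using False by auto
            also have "r - 1 + 1 = r" using False by auto
            also have "c2 * (2 * P ^ Suc r / real r) = 2 * 4 ^ Suc r * g t * P ^ Suc r"
              unfolding c2_def using False by (simp add: field_simps)
            finally show ?thesis .
          qed
        qed
        also have "\<dots> = 4 ^ (k - 1) * g t * sqrt (tailint g t) ^ (k - 2)"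
          unfolding P_def k by simp
        finally show ?thesis using qi by simp
      qed
      have qi: "\<forall>t\<ge>0. qk M k integrable_on {t..}" using key by blast
      have "Qk M k = (\<lambda>s. - tailint (qk M k) s)"
        using Qk_qk[of k M] k by auto
      moreover have "continuous_on {0..} (tailint (qk M k))"
        by (rule tail_cont[OF qc]) (use qi in auto)
      ultimately have "continuous_on {0..} (Qk M k)" by (auto intro: continuous_intros)
      then show ?thesis using qi key by blast
    qed
  qed
qed


lemma Q2_eq: "Qk M 2 s = - tailint (\<lambda>s. (tailint M s)\<^sup>2) s"
proof -
  have "qk M 2 = (\<lambda>s. (tailint M s)\<^sup>2)"
    by (rule ext) (simp add: qk_def power2_eq_square)
  then show ?thesis using Qk_qk[of 2 M s] by simp
qed

lemma phi_eq: "phi M t = tailint (tailint (\<lambda>s. (tailint M s)\<^sup>2)) t"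
proof -
  have "Qk M 2 = (\<lambda>s. - tailint (\<lambda>s. (tailint M s)\<^sup>2) s)" using Q2_eq by auto
  then show ?thesis unfolding phi_def tailint_def by simp
qed

theorem lemma2:
  fixes M :: "real \<Rightarrow> real" and \<gamma> T :: real
  assumes "continuous_on {0..} M"
    and "\<gamma> > 0" and "M3 M \<gamma>"
    and "T \<ge> 0"
  shows "(\<forall>k\<ge>1. \<forall>t\<ge>T. qk M k integrable_on {t..})
    \<and> (\<forall>t\<ge>T. Qk M 2 t \<le> 0)
    \<and> (\<forall>k::nat\<ge>2. \<forall>t\<ge>T.
         \<bar>Qk M k t\<bar> \<le> 4 ^ (k - 1) * (- Qk M 2 t) * sqrt (phi M t) ^ (k - 2))"
proof -
  have Mi: "\<And>x. x \<ge> 0 \<Longrightarrow> M integrable_on {x..}"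
    and Ai: "\<And>x. x \<ge> 0 \<Longrightarrow> (\<lambda>s. (tailint M s)\<^sup>2) integrable_on {x..}"
    and gi0: "(\<lambda>t. tailint (\<lambda>s. (tailint M s)\<^sup>2) t) integrable_on {0..}"
    using assms(3) unfolding M3_def by auto
  define g where "g = tailint (\<lambda>s. (tailint M s)\<^sup>2)"
  note MI = main_ind[OF assms(1) Mi Ai gi0 g_def]
  have Q2: "Qk M 2 t = - g t" for t unfolding g_def by (rule Q2_eq)
  have ph: "phi M t = tailint g t" for t unfolding g_def by (rule phi_eq)
  have gnn: "g t \<ge> 0" if "t \<ge> 0" for t unfolding g_def
    by (rule tail_nonneg) (use Ai that in auto)
  show ?thesis
  proof (intro conjI allI impI)
    fix k :: nat and t :: real assume "1 \<le> k" "T \<le> t"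
    then show "qk M k integrable_on {t..}" using MI[of k] assms(4) by auto
  next
    fix t :: real assume "T \<le> t"
    then show "Qk M 2 t \<le> 0" using Q2[of t] gnn[of t] assms(4) by simp
  next
    fix k :: nat and t :: real assume "2 \<le> k" "T \<le> t"
    then show "\<bar>Qk M k t\<bar> \<le> 4 ^ (k - 1) * (- Qk M 2 t) * sqrt (phi M t) ^ (k - 2)"
      using MI[of k] assms(4) unfolding Q2 ph by auto
  qed
qed

end
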